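(* Let $\mathcal{T}$ be the twisted $N=2$ superconformal algebra (defined in the context), let $\lambda\in\mathbb{C}^*$, $\alpha\in\mathbb{C}$ and $t\in\{1,-1\}$. Let $V=\mathbb{C}[\partial^2]\oplus\partial\mathbb{C}[\partial^2]$ be the $\mathbb{Z}_2$-graded vector space with $V_{\bar0}=\mathbb{C}[\partial^2]$ and $V_{\bar1}=\partial\mathbb{C}[\partial^2]$. For $m\in\mathbb{Z}$, $r\in\frac12+\mathbb{Z}$, $p\in\frac12\mathbb{Z}$ and $f(\partial^2)\in\mathbb{C}[\partial^2]$ define $$L_mf(\partial^2)=\lambda^m(\partial^2+m\alpha)f(\partial^2+m),\qquad L_m\partial f(\partial^2)=\lambda^m\big(\partial^2+m(\alpha+\tfrac12)\big)\partial f(\partial^2+m),$$ $$I_rf(\partial^2)=-2t^{2r}\lambda^{r}\alpha f(\partial^2+r),\qquad I_r\partial f(\partial^2)=t^{2r}\lambda^{r}(1-2\alpha)\partial f(\partial^2+r),$$ $$G_pf(\partial^2)=t^{2p}\lambda^p\partial f(\partial^2+p),\qquad G_p\partial f(\partial^2)=(-t)^{2p}\lambda^p(\partial^2+2p\alpha)f(\partial^2+p).$$ Then these formulas make $V$ a $\mathcal{T}$-module (denoted $\mathcal{M}_t(\lambda,\alpha)$), and as a module over $\mathcal{U}(\mathfrak{h})$, $\mathfrak{h}=\mathbb{C}L_0\oplus\mathbb{C}G_0$, it is free of rank $1$.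
   Context: The twisted $N=2$ superconformal algebra $\mathcal{T}$ is the Lie superalgebra over $\mathbb{C}$ with basis $\{L_m, I_r, G_p\mid m\in\mathbb{Z}, r\in\frac12+\mathbb{Z}, p\in\frac12\mathbb{Z}\}$, even part spanned by the $L_m,I_r$, odd part spanned by the $G_p$, and with the only nonzero brackets $[L_m,L_n]=(m-n)L_{m+n}$, $[L_m,I_r]=-rI_{m+r}$, $[L_m,G_p]=(\frac m2-p)G_{m+p}$, $[I_r,G_p]=G_{r+p}$, and $[G_p,G_q]=(-1)^{2p}2L_{p+q}$ if $p+q\in\mathbb{Z}$, $[G_p,G_q]=(-1)^{2p+1}(p-q)I_{p+q}$ if $p+q\in\frac12+\mathbb{Z}$. A $\mathcal{T}$-module is a $\mathbb{Z}_2$-graded space $V$ with $\mathcal{T}_{\bar i}V_{\bar j}\subseteq V_{\bar i+\bar j}$ and $x(yv)-(-1)^{|x||y|}y(xv)=[x,y]v$. Here $\partial$ is a formal variable, $f(\partial^2+m)$ means the polynomial $f$ evaluated at $\partial^2+m$, and for $p\in\frac12\mathbb{Z}$, $\lambda^p$ means $(\lambda^{1/2})^{2p}$ for a fixed choice of square root $\lambda^{1/2}$. *)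

theory Defs
  imports Complex_Main "HOL-Computational_Algebra.Polynomial"
begin

text \<open>Basis elements: Lb m = L_m (m integer), Ib r = I_r (r in 1/2 + Z),
  Gb p = G_p (p in 1/2 Z).  Indices of I and G are real numbers subject to
  the validity predicate below.\<close>

datatype Tbasis = Lb int | Ib real | Gb real

definition half_int :: "real \<Rightarrow> bool" where
  "half_int r \<longleftrightarrow> r - 1/2 \<in> \<int>"

fun valid :: "Tbasis \<Rightarrow> bool" where
  "valid (Lb m) = True"
| "valid (Ib r) = half_int r"
| "valid (Gb p) = (2 * p \<in> \<int>)"

fun odd_b :: "Tbasis \<Rightarrow> bool" where
  "odd_b (Gb p) = True"
| "odd_b _ = False"

text \<open>For p in 1/2 Z and z a complex number, hpow z p = z^(2p) (an integer power).
  With z = lambda^(1/2) this is lambda^p in the paper's convention.\<close>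
definition hpow :: "complex \<Rightarrow> real \<Rightarrow> complex" where
  "hpow z p = z powi \<lfloor>2 * p\<rfloor>"

text \<open>The Lie superbracket of two basis elements is a scalar multiple of a
  basis element; it is returned as (coefficient, basis element).  The zero
  bracket is represented with coefficient 0.  Brackets not listed in the
  definition of T are obtained by super-antisymmetry
  [y,x] = -(-1)^(|x||y|) [x,y].\<close>
fun tbr :: "Tbasis \<Rightarrow> Tbasis \<Rightarrow> complex \<times> Tbasis" where
  "tbr (Lb m) (Lb n) = (of_int (m - n), Lb (m + n))"
| "tbr (Lb m) (Ib r) = (- of_real r, Ib (of_int m + r))"
| "tbr (Ib r) (Lb m) = (of_real r, Ib (r + of_int m))"
| "tbr (Lb m) (Gb p) = (of_real (of_int m / 2 - p), Gb (of_int m + p))"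
| "tbr (Gb p) (Lb m) = (- of_real (of_int m / 2 - p), Gb (p + of_int m))"
| "tbr (Ib r) (Gb p) = (1, Gb (r + p))"
| "tbr (Gb p) (Ib r) = (-1, Gb (p + r))"
| "tbr (Ib r) (Ib s) = (0, Lb 0)"
| "tbr (Gb p) (Gb q) =
     (if p + q \<in> \<int> then ((-1) powi \<lfloor>2 * p\<rfloor> * 2, Lb \<lfloor>p + q\<rfloor>)
      else ((-1) powi (\<lfloor>2 * p\<rfloor> + 1) * of_real (p - q), Ib (p + q)))"

text \<open>An element (f, g) stands for f(d^2) + d g(d^2); the even part
  V_0 = C[d^2] is {(f,0)}, the odd part V_1 = d C[d^2] is {(0,g)}.\<close>
type_synonym V = "complex poly \<times> complex poly"

definition vadd :: "V \<Rightarrow> V \<Rightarrow> V" where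
  "vadd u w = (fst u + fst w, snd u + snd w)"

definition vsub :: "V \<Rightarrow> V \<Rightarrow> V" where
  "vsub u w = (fst u - fst w, snd u - snd w)"

definition vsc :: "complex \<Rightarrow> V \<Rightarrow> V" where
  "vsc c u = (smult c (fst u), smult c (snd u))"

definition vzero :: V where "vzero = (0, 0)"

definition even_V :: "V \<Rightarrow> bool" where "even_V u \<longleftrightarrow> snd u = 0"
definition odd_V :: "V \<Rightarrow> bool" where "odd_V u \<longleftrightarrow> fst u = 0"

definition shift :: "complex \<Rightarrow> complex poly \<Rightarrow> complex poly" where
  "shift a f = pcompose f [:a, 1:]"

text \<open>A family of operators act x (x a basis element) defines a T-module
  structure on V (by linear extension) iff each operator is linear, respects
  the Z_2-grading, and x(yv) - (-1)^(|x||y|) y(xv) = [x,y]v for all basis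
  elements x, y and all v.\<close>
definition is_T_module :: "(Tbasis \<Rightarrow> V \<Rightarrow> V) \<Rightarrow> bool" where
  "is_T_module act \<longleftrightarrow>
     (\<forall>x. valid x \<longrightarrow>
        (\<forall>u w. act x (vadd u w) = vadd (act x u) (act x w)) \<and>
        (\<forall>c u. act x (vsc c u) = vsc c (act x u)) \<and>
        (\<forall>u. even_V u \<longrightarrow> (if odd_b x then odd_V (act x u) else even_V (act x u))) \<and>
        (\<forall>u. odd_V u \<longrightarrow> (if odd_b x then even_V (act x u) else odd_V (act x u)))) \<and>
     (\<forall>x y v. valid x \<longrightarrow> valid y \<longrightarrow>
        vsub (act x (act y v))
             (vsc (if odd_b x \<and> odd_b y then -1 else 1) (act y (act x v)))
        = vsc (fst (tbr x y)) (act (snd (tbr x y)) v))"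

definition poly_act :: "complex poly \<Rightarrow> (V \<Rightarrow> V) \<Rightarrow> V \<Rightarrow> V" where
  "poly_act a A v = foldr vadd (map (\<lambda>i. vsc (coeff a i) ((A ^^ i) v)) [0..<Suc (degree a)]) vzero"

text \<open>By PBW, U(h) has basis L_0^i, L_0^i G_0 (i >= 0) (note [G_0,G_0] = 2 L_0),
  so every element of U(h) is uniquely a(L_0) + b(L_0) G_0 with polynomials a, b.\<close>
definition free_rank1_Uh :: "(Tbasis \<Rightarrow> V \<Rightarrow> V) \<Rightarrow> bool" where
  "free_rank1_Uh act \<longleftrightarrow>
     (\<exists>v. \<forall>w. \<exists>!ab :: complex poly \<times> complex poly.
         w = vadd (poly_act (fst ab) (act (Lb 0)) v)
                  (poly_act (snd ab) (act (Lb 0)) (act (Gb 0) v)))"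

text \<open>mu is the fixed square root lambda^(1/2); lambda = mu^2.\<close>
fun Mact :: "complex \<Rightarrow> complex \<Rightarrow> complex \<Rightarrow> Tbasis \<Rightarrow> V \<Rightarrow> V" where
  "Mact t mu \<alpha> (Lb m) (f, g) =
     (smult (hpow mu (of_int m)) ([:of_int m * \<alpha>, 1:] * shift (of_int m) f),
      smult (hpow mu (of_int m)) ([:of_int m * (\<alpha> + 1/2), 1:] * shift (of_int m) g))"
| "Mact t mu \<alpha> (Ib r) (f, g) =
     (smult (- 2 * hpow t r * hpow mu r * \<alpha>) (shift (of_real r) f),
      smult (hpow t r * hpow mu r * (1 - 2 * \<alpha>)) (shift (of_real r) g))"
| "Mact t mu \<alpha> (Gb p) (f, g) =
     (smult (hpow (- t) p * hpow mu p) ([:2 * of_real p * \<alpha>, 1:] * shift (of_real p) g),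
      smult (hpow t p * hpow mu p) (shift (of_real p) f))"

end

theory Submission
  imports Defs
begin

lemma poly_shift[simp]: "poly (shift a f) x = poly f (a + x)"
  by (simp add: shift_def poly_pcompose)

lemma pair_poly_eq: fixes a b c d :: "complex poly"
  shows "(\<And>x. poly a x = poly b x) \<Longrightarrow> (\<And>x. poly c x = poly d x) \<Longrightarrow> (a, c) = (b, d)"
proof -
  assume h1: "\<And>x. poly a x = poly b x" and h2: "\<And>x. poly c x = poly d x"
  have "poly a = poly b" "poly c = poly d" using h1 h2 by auto
  then show ?thesis by (metis poly_eq_poly_eq_iff)
qed

lemma floor_add_int2: "2 * a \<in> \<int> \<Longrightarrow> \<lfloor>2 * (a + b)\<rfloor> = \<lfloor>2 * a\<rfloor> + \<lfloor>2 * b\<rfloor>"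
proof -
  assume "2 * a \<in> \<int>" then obtain k where "2 * a = of_int k" by (auto elim: Ints_cases)
  then show ?thesis by (simp add: distrib_left)
qed

lemma hpow_add: "z \<noteq> 0 \<Longrightarrow> 2 * a \<in> \<int> \<or> 2 * b \<in> \<int> \<Longrightarrow> hpow z (a + b) = hpow z a * hpow z b"
  unfolding hpow_def
  by (metis add.commute floor_add_int2 power_int_add)

lemma floor2int[simp]: "\<lfloor>2 * (of_int m :: real)\<rfloor> = 2 * m"
  by (metis floor_of_int of_int_mult of_int_numeral)

lemma hpow_int[simp]: "hpow z (of_int m) = (z^2) powi m"
  unfolding hpow_def by (simp add: power_int_mult)

lemma int2[simp]: "2 * (of_int m :: real) \<in> \<int>" by simp

lemma hpow_one[simp]: "hpow 1 p = 1" by (simp add: hpow_def)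

lemma hpow_nz[simp]: "z \<noteq> 0 \<Longrightarrow> hpow z p \<noteq> 0" by (simp add: hpow_def)

lemma hpow_m1_sq[simp]: "hpow (-1) p * hpow (-1) p = 1" by (simp add: hpow_def)

lemma hpow_m1_sq'[simp]: "hpow (-1) p * (hpow (-1) p * a) = a"
  by (simp add: mult.assoc[symmetric])

lemma half_int2: "half_int r \<Longrightarrow> 2 * r \<in> \<int>"
proof -
  assume "half_int r" then obtain k where "r - 1/2 = of_int k" unfolding half_int_def by (auto elim: Ints_cases)
  then have "2 * r = of_int (2*k+1)" by simp
  then show ?thesis by (metis Ints_of_int)
qed

lemma half_int_floor: "half_int r \<Longrightarrow> odd \<lfloor>2 * r\<rfloor>"
proof -
  assume "half_int r" then obtain k where "r - 1/2 = of_int k" unfolding half_int_def by (auto elim: Ints_cases)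
  then have "2 * r = of_int (2*k+1)" by simp
  then show ?thesis by simp
qed

lemma hpow_neg_half: "half_int r \<Longrightarrow> hpow (-z) r = - hpow z r"
  unfolding hpow_def using half_int_floor by simp

lemma hpow_m1_half: "half_int r \<Longrightarrow> hpow (-1) r = - 1"
  using hpow_neg_half[of r 1] by simp

lemma m1_floor_fold[simp]: "(-1) powi \<lfloor>2 * p\<rfloor> = hpow (-1) p"
  by (simp add: hpow_def)

lemma m1_floor_fold1[simp]: "(-1 :: complex) powi (\<lfloor>2 * p\<rfloor> + 1) = - hpow (-1) p"
  unfolding hpow_def by (simp add: power_int_add del: m1_floor_fold)

lemmas S = add_ac power_int_add hpow_add hpow_m1_half hpow_neg_half half_int2

lemma LL: assumes "mu \<noteq> 0" "t = 1 \<or> t = -1"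
  shows "vsub (Mact t mu al (Lb m) (Mact t mu al (Lb n) (f,g))) (vsc 1 (Mact t mu al (Lb n) (Mact t mu al (Lb m) (f,g))))
    = vsc (of_int (m - n)) (Mact t mu al (Lb (m+n)) (f,g))"
  unfolding vsub_def vsc_def
  using assms(2) apply (elim disjE)
  apply (simp_all only: Mact.simps fst_conv snd_conv)
  apply (rule pair_poly_eq; simp add: S assms; simp add: field_simps)+
  done


lemma LI: assumes "mu \<noteq> 0" "t = 1 \<or> t = -1" "half_int r"
  shows "vsub (Mact t mu al (Lb m) (Mact t mu al (Ib r) (f,g))) (vsc 1 (Mact t mu al (Ib r) (Mact t mu al (Lb m) (f,g))))
    = vsc (- of_real r) (Mact t mu al (Ib (of_int m + r)) (f,g))"
  unfolding vsub_def vsc_def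
  using assms(2) apply (elim disjE)
  apply (simp_all only: Mact.simps fst_conv snd_conv)
  apply (rule pair_poly_eq; simp add: S assms; simp add: field_simps)+
  done


lemma IL: assumes "mu \<noteq> 0" "t = 1 \<or> t = -1" "half_int r"
  shows "vsub (Mact t mu al (Ib r) (Mact t mu al (Lb m) (f,g))) (vsc 1 (Mact t mu al (Lb m) (Mact t mu al (Ib r) (f,g))))
    = vsc (of_real r) (Mact t mu al (Ib (r + of_int m)) (f,g))"
  unfolding vsub_def vsc_def
  using assms(2) apply (elim disjE)
  apply (simp_all only: Mact.simps fst_conv snd_conv)
  apply (rule pair_poly_eq; simp add: S assms; simp add: field_simps)+
  done


lemma LG: assumes "mu \<noteq> 0" "t = 1 \<or> t = -1" "2 * p \<in> \<int>"
  shows "vsub (Mact t mu al (Lb m) (Mact t mu al (Gb p) (f,g))) (vsc 1 (Mact t mu al (Gb p) (Mact t mu al (Lb m) (f,g))))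
    = vsc (of_real (of_int m / 2 - p)) (Mact t mu al (Gb (of_int m + p)) (f,g))"
  unfolding vsub_def vsc_def
  using assms(2) apply (elim disjE)
  apply (simp_all only: Mact.simps fst_conv snd_conv)
  apply (rule pair_poly_eq; simp add: S assms; simp add: field_simps)+
  done


lemma GL: assumes "mu \<noteq> 0" "t = 1 \<or> t = -1" "2 * p \<in> \<int>"
  shows "vsub (Mact t mu al (Gb p) (Mact t mu al (Lb m) (f,g))) (vsc 1 (Mact t mu al (Lb m) (Mact t mu al (Gb p) (f,g))))
    = vsc (- of_real (of_int m / 2 - p)) (Mact t mu al (Gb (p + of_int m)) (f,g))"
  unfolding vsub_def vsc_def
  using assms(2) apply (elim disjE)
  apply (simp_all only: Mact.simps fst_conv snd_conv)
  apply (rule pair_poly_eq; simp add: S assms; simp add: field_simps)+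
  done


lemma IG: assumes "mu \<noteq> 0" "t = 1 \<or> t = -1" "2 * p \<in> \<int>" "half_int r"
  shows "vsub (Mact t mu al (Ib r) (Mact t mu al (Gb p) (f,g))) (vsc 1 (Mact t mu al (Gb p) (Mact t mu al (Ib r) (f,g))))
    = vsc 1 (Mact t mu al (Gb (r + p)) (f,g))"
  unfolding vsub_def vsc_def
  using assms(2) apply (elim disjE)
  apply (simp_all only: Mact.simps fst_conv snd_conv)
  apply (rule pair_poly_eq; simp add: S assms; simp add: field_simps)+
  done


lemma GI: assumes "mu \<noteq> 0" "t = 1 \<or> t = -1" "2 * p \<in> \<int>" "half_int r"
  shows "vsub (Mact t mu al (Gb p) (Mact t mu al (Ib r) (f,g))) (vsc 1 (Mact t mu al (Ib r) (Mact t mu al (Gb p) (f,g))))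
    = vsc (-1) (Mact t mu al (Gb (p + r)) (f,g))"
  unfolding vsub_def vsc_def
  using assms(2) apply (elim disjE)
  apply (simp_all only: Mact.simps fst_conv snd_conv)
  apply (rule pair_poly_eq; simp add: S assms; simp add: field_simps)+
  done


lemma II: assumes "mu \<noteq> 0" "t = 1 \<or> t = -1" "half_int s" "half_int r"
  shows "vsub (Mact t mu al (Ib r) (Mact t mu al (Ib s) (f,g))) (vsc 1 (Mact t mu al (Ib s) (Mact t mu al (Ib r) (f,g))))
    = vsc 0 (Mact t mu al (Lb 0) (f,g))"
  unfolding vsub_def vsc_def
  using assms(2) apply (elim disjE)
  apply (simp_all only: Mact.simps fst_conv snd_conv)
  apply (rule pair_poly_eq; simp add: S assms; simp add: field_simps)+
  done




lemma two_int: "2 * (p::real) \<in> \<int> \<Longrightarrow> \<exists>k. p = of_int k / 2 \<and> \<lfloor>2 * p\<rfloor> = k"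
proof -
  assume "2 * p \<in> \<int>" then obtain k where "2 * p = of_int k" by (auto elim: Ints_cases)
  then show ?thesis by (intro exI[of _ k]) auto
qed

lemma hpow_m1_ev: "hpow (-1) p = (if even \<lfloor>2 * p\<rfloor> then 1 else -1)"
  unfolding hpow_def by (simp add: power_int_minus_left del: m1_floor_fold)

lemma sign_int: fixes p q :: real assumes "2 * p \<in> \<int>" "2 * q \<in> \<int>" "p + q \<in> \<int>"
  shows "hpow (-1) q = hpow (-1) p"
proof -
  obtain k where k: "p = of_int k / 2" "\<lfloor>2 * p\<rfloor> = k" using two_int[OF assms(1)] by blast
  obtain l where l: "q = of_int l / 2" "\<lfloor>2 * q\<rfloor> = l" using two_int[OF assms(2)] by blast
  obtain n where n: "p + q = of_int n" using assms(3) by (auto elim: Ints_cases)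
  have "of_int (k + l) = (of_int (2 * n) :: real)" using k l n by simp
  then have "k + l = 2 * n" by linarith
  then have "even (k + l)" by simp
  then have "even k \<longleftrightarrow> even l" by simp
  then show ?thesis by (simp add: hpow_m1_ev k l)
qed

lemma sign_half: fixes p q :: real assumes "2 * p \<in> \<int>" "2 * q \<in> \<int>" "p + q \<notin> \<int>"
  shows "hpow (-1) q = - hpow (-1) p" "half_int (p + q)"
proof -
  obtain k where k: "p = of_int k / 2" "\<lfloor>2 * p\<rfloor> = k" using two_int[OF assms(1)] by blast
  obtain l where l: "q = of_int l / 2" "\<lfloor>2 * q\<rfloor> = l" using two_int[OF assms(2)] by blast
  have odd: "odd (k + l)"
  proof
    assume "even (k + l)" then obtain n where "k + l = 2 * n" by (rule evenE)
    then have "p + q = of_int n" using k l by (simp add: add_divide_distrib[symmetric])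
    then show False using assms(3) by simp
  qed
  then have "even k \<longleftrightarrow> odd l" by simp
  then show "hpow (-1) q = - hpow (-1) p" by (simp add: hpow_m1_ev k l)
  obtain n where "k + l = 2 * n + 1" using odd by (rule oddE)
  then have "p + q - 1/2 = of_int n" using k l by (simp add: field_simps)
  then show "half_int (p + q)" unfolding half_int_def by simp
qed

lemma GGi: assumes "mu \<noteq> 0" "t = 1 \<or> t = -1" "2 * p \<in> \<int>" "2 * q \<in> \<int>" "p + q = of_int n"
  shows "vsub (Mact t mu al (Gb p) (Mact t mu al (Gb q) (f,g))) (vsc (-1) (Mact t mu al (Gb q) (Mact t mu al (Gb p) (f,g))))
    = vsc (hpow (-1) p * 2) (Mact t mu al (Lb n) (f,g))"
proof -
  have F1: "complex_of_int n = of_real p + of_real q"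
  proof -
    have "of_real (p + q) = (of_real (of_int n) :: complex)" using assms(5) by simp
    then show ?thesis by simp
  qed
  have F2: "hpow (-1) q = hpow (-1) p" using sign_int[OF assms(3,4)] assms(5) by simp
  have F3: "(mu^2) powi n = hpow mu p * hpow mu q"
  proof -
    have "hpow mu (p + q) = hpow mu p * hpow mu q" by (rule hpow_add) (simp_all add: assms)
    then show ?thesis using assms(5) by simp
  qed
  show ?thesis
  unfolding vsub_def vsc_def
  using assms(2) apply (elim disjE)
  apply (simp_all only: Mact.simps fst_conv snd_conv)
  apply (rule pair_poly_eq; simp add: S assms F1 F2 F3; simp add: field_simps)+
  done
qed

lemma GGh: assumes "mu \<noteq> 0" "t = 1 \<or> t = -1" "2 * p \<in> \<int>" "2 * q \<in> \<int>" "p + q \<notin> \<int>"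
  shows "vsub (Mact t mu al (Gb p) (Mact t mu al (Gb q) (f,g))) (vsc (-1) (Mact t mu al (Gb q) (Mact t mu al (Gb p) (f,g))))
    = vsc (- hpow (-1) p * of_real (p - q)) (Mact t mu al (Ib (p + q)) (f,g))"
proof -
  have F2: "hpow (-1) q = - hpow (-1) p" using sign_half(1)[OF assms(3,4,5)] .
  show ?thesis
  unfolding vsub_def vsc_def
  using assms(2) apply (elim disjE)
  apply (simp_all only: Mact.simps fst_conv snd_conv)
  apply (rule pair_poly_eq; simp add: S assms F2; simp add: field_simps)+
  done
qed



lemma shift_zero[simp]: "shift 0 f = f" by (simp add: shift_def)
lemma shift_of0[simp]: "shift a 0 = 0" by (simp add: shift_def)
lemma hpow_zero[simp]: "hpow z 0 = 1" by (simp add: hpow_def)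

lemma L0_act: "Mact t mu al (Lb 0) (f, g) = ([:0,1:] * f, [:0,1:] * g)"
  by simp

lemma L0_pow: "((Mact t mu al (Lb 0)) ^^ i) (f, g) = ([:0,1:]^i * f, [:0,1:]^i * g)"
  by (induction i) (simp_all only: funpow.simps comp_def L0_act id_def, simp_all add: mult.assoc)

lemma foldr_vadd: "foldr vadd (map h xs) vzero = (\<Sum>x\<leftarrow>xs. fst (h x), \<Sum>x\<leftarrow>xs. snd (h x))"
  by (induction xs) (simp_all add: vadd_def vzero_def)

lemma poly_act_L0: "poly_act a (Mact t mu al (Lb 0)) (f, g) = (a * f, a * g)"
proof -
  have s: "(\<Sum>i\<leftarrow>[0..<Suc (degree a)]. smult (coeff a i) ([:0,1:]^i * h)) = a * h" for h :: "complex poly"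
  proof -
    have "(\<Sum>i\<leftarrow>[0..<Suc (degree a)]. smult (coeff a i) ([:0,1:]^i * h))
        = (\<Sum>i\<in>{..degree a}. monom (coeff a i) i) * h"
    proof -
      have e: "set [0..<Suc (degree a)] = {..degree a}" by auto
      show ?thesis unfolding interv_sum_list_conv_sum_set_nat e
        by (simp add: sum_distrib_right monom_altdef)
    qed
    also have "\<dots> = a * h" by (simp add: poly_as_sum_of_monoms)
    finally show ?thesis .
  qed
  show ?thesis unfolding poly_act_def foldr_vadd
    by (simp only: L0_pow vsc_def fst_conv snd_conv s)
qed

lemma free: "free_rank1_Uh (Mact t mu al)"
  unfolding free_rank1_Uh_def
proof (intro exI[of _ "(1, 0)"] allI)
  fix w :: V
  have G0: "Mact t mu al (Gb 0) (1, 0) = (0, 1)" by simp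
  show "\<exists>!ab. w = vadd (poly_act (fst ab) (Mact t mu al (Lb 0)) (1, 0))
                   (poly_act (snd ab) (Mact t mu al (Lb 0)) (Mact t mu al (Gb 0) (1, 0)))"
    unfolding G0 poly_act_L0 vadd_def
    by (rule ex1I[of _ w]) auto
qed


lemma lin_grade:
  assumes "t = 1 \<or> t = -1" "mu \<noteq> 0"
  shows "(\<forall>u w. Mact t mu al x (vadd u w) = vadd (Mact t mu al x u) (Mact t mu al x w)) \<and>
        (\<forall>c u. Mact t mu al x (vsc c u) = vsc c (Mact t mu al x u)) \<and>
        (\<forall>u. even_V u \<longrightarrow> (if odd_b x then odd_V (Mact t mu al x u) else even_V (Mact t mu al x u))) \<and>
        (\<forall>u. odd_V u \<longrightarrow> (if odd_b x then even_V (Mact t mu al x u) else odd_V (Mact t mu al x u)))"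
proof (intro conjI allI impI)
  fix u w :: V
  obtain a b where u: "u = (a, b)" by (cases u)
  obtain c d where w: "w = (c, d)" by (cases w)
  show "Mact t mu al x (vadd u w) = vadd (Mact t mu al x u) (Mact t mu al x w)"
    unfolding u w vadd_def
    by (cases x; simp only: Mact.simps fst_conv snd_conv; rule pair_poly_eq; simp add: field_simps)
next
  fix c :: complex and u :: V
  obtain a b where u: "u = (a, b)" by (cases u)
  show "Mact t mu al x (vsc c u) = vsc c (Mact t mu al x u)"
    unfolding u vsc_def
    by (cases x; simp only: Mact.simps fst_conv snd_conv; rule pair_poly_eq; simp add: field_simps)
next
  fix u :: V
  assume "even_V u"
  then obtain a where u: "u = (a, 0)" unfolding even_V_def by (cases u) auto
  show "if odd_b x then odd_V (Mact t mu al x u) else even_V (Mact t mu al x u)"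
    unfolding u by (cases x) (simp_all add: odd_V_def even_V_def)
next
  fix u :: V
  assume "odd_V u"
  then obtain a where u: "u = (0, a)" unfolding odd_V_def by (cases u) auto
  show "if odd_b x then even_V (Mact t mu al x u) else odd_V (Mact t mu al x u)"
    unfolding u by (cases x) (simp_all add: odd_V_def even_V_def)
qed

lemma rel:
  assumes mu0: "mu \<noteq> 0" and tc: "t = 1 \<or> t = -1" and vx: "valid x" and vy: "valid y"
  shows "vsub (Mact t mu al x (Mact t mu al y v))
             (vsc (if odd_b x \<and> odd_b y then -1 else 1) (Mact t mu al y (Mact t mu al x v)))
        = vsc (fst (tbr x y)) (Mact t mu al (snd (tbr x y)) v)"
proof -
  obtain f g where v: "v = (f, g)" by (cases v)
  show ?thesis
  proof (cases x)
    case (Lb m) note x = this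
    show ?thesis
    proof (cases y)
      case (Lb n) show ?thesis using LL[OF mu0 tc, of al m n f g] by (simp add: x Lb v del: Mact.simps)
    next
      case (Ib r) show ?thesis using LI[OF mu0 tc, of r al m f g] vy by (simp add: x Ib v del: Mact.simps)
    next
      case (Gb p) show ?thesis using LG[OF mu0 tc, of p al m f g] vy by (simp add: x Gb v del: Mact.simps)
    qed
  next
    case (Ib r) note x = this
    show ?thesis
    proof (cases y)
      case (Lb n) show ?thesis using IL[OF mu0 tc, of r al n f g] vx by (simp add: x Lb v del: Mact.simps)
    next
      case (Ib s) show ?thesis using II[OF mu0 tc, of s r al f g] vx vy by (simp add: x Ib v del: Mact.simps)
    next
      case (Gb p) show ?thesis using IG[OF mu0 tc, of p r al f g] vx vy by (simp add: x Gb v del: Mact.simps)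
    qed
  next
    case (Gb p) note x = this
    show ?thesis
    proof (cases y)
      case (Lb n) show ?thesis using GL[OF mu0 tc, of p al n f g] vx by (simp add: x Lb v del: Mact.simps)
    next
      case (Ib r) show ?thesis using GI[OF mu0 tc, of p r al f g] vx vy by (simp add: x Ib v del: Mact.simps)
    next
      case (Gb q)
      have p2: "2 * p \<in> \<int>" using vx x by simp
      have q2: "2 * q \<in> \<int>" using vy Gb by simp
      show ?thesis
      proof (cases "p + q \<in> \<int>")
        case True
        then have pq: "p + q = of_int \<lfloor>p + q\<rfloor>" by (metis Ints_cases floor_of_int)
        show ?thesis using GGi[OF mu0 tc p2 q2 pq, of al f g] True
          by (simp add: x Gb v del: Mact.simps)
      next
        case False
        show ?thesis using GGh[OF mu0 tc p2 q2 False, of al f g] False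
          by (simp add: x Gb v del: Mact.simps)
      qed
    qed
  qed
qed

theorem proposition2p3:
  fixes lam mu \<alpha> t :: complex
  assumes "lam \<noteq> 0" and "mu ^ 2 = lam" and "t = 1 \<or> t = -1"
  shows "is_T_module (Mact t mu \<alpha>) \<and> free_rank1_Uh (Mact t mu \<alpha>)"
proof -
  have mu0: "mu \<noteq> 0" using assms(1,2) by auto
  have "is_T_module (Mact t mu \<alpha>)"
    unfolding is_T_module_def
    using lin_grade[OF assms(3) mu0] rel[OF mu0 assms(3)] by blast
  then show ?thesis using free by blast
qed

end
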